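(* Let $\mathbb{X}$ be a discrete group with identity $\circ$, and let $\mu$ be a finitely supported probability measure on $\mathbb{X}$ satisfying (A1) $\mu(xzx^{-1})=\mu(z)$ for all $x,z\in\mathbb{X}$ and (A2) $\mu(z)=\mu(z^{-1})$ for all $z\in\mathbb{X}$. Let $(W_n)_{n\ge1}$ be i.i.d. samples from $\mu$, $(N_t)_{t\ge0}$ a unit-rate Poisson process independent of $(W_n)$, and for $t\ge 0$ and $z\in\mathbb{X}$ let $N_{t,z}:=\ell_z(W_1,\ldots,W_{N_t})$. Then $N_{t,z}$ is a Poisson random variable with mean $t\mu(z)$.
   Context: For $w=(w_1,\ldots,w_m)\in\mathbb{X}^m$ and $z\in\mathbb{X}$, $\ell_z(w):=\sum_{j=1}^m\mathbf{1}\{w_j=(w_{j+1}\cdots w_m)\,z\,(w_{j+1}\cdots w_m)^{-1}\}$, where for $j=m$ the product $w_{j+1}\cdots w_m$ is the identity $\circ$ (and $\ell_z$ of the empty sequence is $0$). *)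

theory Defs
  imports "HOL-Algebra.Group" "HOL-Probability.Probability"
begin

definition grp_prod :: "('a, 'b) monoid_scheme \<Rightarrow> 'a list \<Rightarrow> 'a" where
  "grp_prod G xs = foldr (\<lambda>x y. x \<otimes>\<^bsub>G\<^esub> y) xs \<one>\<^bsub>G\<^esub>"

text \<open>ell_z(w) = number of j in 1..m with w_j = s_j z s_j^{-1}, s_j = w_{j+1} ... w_m.
  Lists are 0-indexed: position j corresponds to w_{j+1}.\<close>
definition ell :: "('a, 'b) monoid_scheme \<Rightarrow> 'a \<Rightarrow> 'a list \<Rightarrow> nat" where
  "ell G z w = card {j. j < length w \<and>
      w ! j = grp_prod G (drop (Suc j) w) \<otimes>\<^bsub>G\<^esub> z \<otimes>\<^bsub>G\<^esub> inv\<^bsub>G\<^esub> (grp_prod G (drop (Suc j) w))}"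

text \<open>Probability that a Poisson variable with mean lam equals k (lam = 0: point mass at 0).\<close>
definition poisson_prob :: "real \<Rightarrow> nat \<Rightarrow> real" where
  "poisson_prob lam k = exp (- lam) * lam ^ k / fact k"

definition (in prob_space) unit_poisson_process :: "(real \<Rightarrow> 'a \<Rightarrow> nat) \<Rightarrow> bool" where
  "unit_poisson_process N \<longleftrightarrow>
     (\<forall>t\<ge>0. random_variable (count_space UNIV) (N t)) \<and>
     (\<forall>\<omega>\<in>space M. N 0 \<omega> = 0) \<and>
     (\<forall>\<omega>\<in>space M. \<forall>s t. 0 \<le> s \<longrightarrow> s \<le> t \<longrightarrow> N s \<omega> \<le> N t \<omega>) \<and>
     (\<forall>ts :: nat \<Rightarrow> real. \<forall>n. (0 \<le> ts 0 \<and> (\<forall>i<n. ts i \<le> ts (Suc i))) \<longrightarrow>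
        indep_vars (\<lambda>_. count_space UNIV) (\<lambda>i \<omega>. N (ts (Suc i)) \<omega> - N (ts i) \<omega>) {..<n}) \<and>
     (\<forall>s t k. 0 \<le> s \<longrightarrow> s \<le> t \<longrightarrow>
        prob {\<omega>\<in>space M. N t \<omega> - N s \<omega> = k} = poisson_prob (t - s) k)"

end

theory Submission
  imports Defs
begin

lemma ell_Cons:
  "ell G z (x # w) = ell G z w +
     (if x = grp_prod G w \<otimes>\<^bsub>G\<^esub> z \<otimes>\<^bsub>G\<^esub> inv\<^bsub>G\<^esub> (grp_prod G w) then 1 else 0)"
proof -
  define P where "P = (\<lambda>j. j < length w \<and>
      w ! j = grp_prod G (drop (Suc j) w) \<otimes>\<^bsub>G\<^esub> z \<otimes>\<^bsub>G\<^esub> inv\<^bsub>G\<^esub> (grp_prod G (drop (Suc j) w)))"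
  define c where "c = (x = grp_prod G w \<otimes>\<^bsub>G\<^esub> z \<otimes>\<^bsub>G\<^esub> inv\<^bsub>G\<^esub> (grp_prod G w))"
  have eq: "{j. j < length (x # w) \<and>
      (x # w) ! j = grp_prod G (drop (Suc j) (x # w)) \<otimes>\<^bsub>G\<^esub> z \<otimes>\<^bsub>G\<^esub> inv\<^bsub>G\<^esub> (grp_prod G (drop (Suc j) (x # w)))}
     = (if c then {0} else {}) \<union> Suc ` {j. P j}"
  proof (rule Set.set_eqI)
    fix j show "j \<in> {j. j < length (x # w) \<and>
      (x # w) ! j = grp_prod G (drop (Suc j) (x # w)) \<otimes>\<^bsub>G\<^esub> z \<otimes>\<^bsub>G\<^esub> inv\<^bsub>G\<^esub> (grp_prod G (drop (Suc j) (x # w)))}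
      \<longleftrightarrow> j \<in> (if c then {0} else {}) \<union> Suc ` {j. P j}"
      unfolding P_def c_def by (cases j) (auto simp: image_iff)
  qed
  have fin: "finite {j. P j}" by (rule finite_subset[of _ "{..<length w}"]) (auto simp: P_def)
  have "card ((if c then {0} else {}) \<union> Suc ` {j. P j}) = (if c then 1 else 0) + card {j. P j}"
    using fin by (auto simp: card_image card_insert_if)
  then show ?thesis unfolding ell_def eq P_def c_def by simp
qed

lemma grp_prod_Cons: "grp_prod G (x # w) = x \<otimes>\<^bsub>G\<^esub> grp_prod G w"
  by (simp add: grp_prod_def)

lemma grp_prod_carrier: "monoid G \<Longrightarrow> set w \<subseteq> carrier G \<Longrightarrow> grp_prod G w \<in> carrier G"
  by (induction w) (auto simp: grp_prod_def monoid.m_closed)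

lemma lists_Suc_eq:
  "{w. set w \<subseteq> S \<and> length w = Suc m} = (\<lambda>(x,w). x # w) ` (S \<times> {w. set w \<subseteq> S \<and> length w = m})"
proof (rule Set.set_eqI)
  fix v show "v \<in> {w. set w \<subseteq> S \<and> length w = Suc m} \<longleftrightarrow>
     v \<in> (\<lambda>(x,w). x # w) ` (S \<times> {w. set w \<subseteq> S \<and> length w = m})"
    by (cases v) (auto simp: image_iff)
qed

lemma binom_recur:
  fixes p :: real and k m :: nat
  shows "p * (if k = 0 then 0 else real (m choose (k - 1)) * p ^ (k - 1) * (1 - p) ^ (m - (k - 1)))
     + (1 - p) * (real (m choose k) * p ^ k * (1 - p) ^ (m - k))
     = real (Suc m choose k) * p ^ k * (1 - p) ^ (Suc m - k)"
proof (cases k)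
  case 0 then show ?thesis by simp
next
  case (Suc j)
  show ?thesis
  proof (cases "j < m")
    case True
    then have e: "m - j = Suc (m - Suc j)" by simp
    show ?thesis using True unfolding Suc by (simp add: e algebra_simps)
  next
    case False
    then have "m choose Suc j = 0" by simp
    moreover have "Suc m - Suc j = m - j" by simp
    ultimately show ?thesis unfolding Suc by (simp add: algebra_simps)
  qed
qed

lemma ell_binomial:
  fixes G :: "('g, 'b) monoid_scheme" and mu :: "'g \<Rightarrow> real"
  assumes grp: "group G"
    and fin: "finite {x. mu x \<noteq> 0}"
    and car: "{x. mu x \<noteq> 0} \<subseteq> carrier G"
    and one: "(\<Sum>x\<in>{x. mu x \<noteq> 0}. mu x) = 1"
    and A1: "\<forall>x\<in>carrier G. \<forall>y\<in>carrier G. mu (x \<otimes>\<^bsub>G\<^esub> y \<otimes>\<^bsub>G\<^esub> inv\<^bsub>G\<^esub> x) = mu y"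
    and z_in: "z \<in> carrier G"
  shows "(\<Sum>w\<in>{w. set w \<subseteq> {x. mu x \<noteq> 0} \<and> length w = m}.
            if ell G z w = k then prod_list (map mu w) else 0)
         = real (m choose k) * mu z ^ k * (1 - mu z) ^ (m - k)"
proof (induction m arbitrary: k)
  case 0
  have e0: "{w. set w \<subseteq> {x. mu x \<noteq> 0} \<and> length w = 0} = {[]}" by auto
  have "ell G z [] = 0" by (simp add: ell_def)
  then show ?case unfolding e0 by simp
next
  case (Suc m)
  define S where "S = {x. mu x \<noteq> 0}"
  define L where "L = {w. set w \<subseteq> S \<and> length w = m}"
  define p where "p = mu z"
  define c where "c = (\<lambda>w. grp_prod G w \<otimes>\<^bsub>G\<^esub> z \<otimes>\<^bsub>G\<^esub> inv\<^bsub>G\<^esub> (grp_prod G w))"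
  have finL: "finite L" unfolding L_def using fin S_def by (simp add: finite_lists_length_eq)
  have finS: "finite S" using fin S_def by simp
  have key: "(\<Sum>x\<in>S. if x = d then mu x else 0) = mu d" for d
    using finS by (cases "d \<in> S") (auto simp: S_def)
  have key2: "(\<Sum>x\<in>S. if x = d then 0 else mu x) = 1 - mu d" for d
  proof -
    have "(\<Sum>x\<in>S. if x = d then 0 else mu x) = (\<Sum>x\<in>S. mu x - (if x = d then mu x else 0))"
      by (rule sum.cong) auto
    also have "\<dots> = 1 - mu d" using key[of d] one by (simp add: sum_subtractf S_def)
    finally show ?thesis .
  qed
  have cz: "mu (c w) = p" if "w \<in> L" for w
  proof -
    have "grp_prod G w \<in> carrier G"
      using that car grp_prod_carrier[of G w] grp unfolding L_def S_def
      by (auto simp: group_def)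
    then show ?thesis using A1 z_in unfolding c_def p_def by blast
  qed
  have inner: "(\<Sum>x\<in>S. if ell G z (x # w) = k then prod_list (map mu (x # w)) else 0)
     = prod_list (map mu w) * ((if ell G z w + 1 = k then p else 0) + (if ell G z w = k then 1 - p else 0))"
    if "w \<in> L" for w
  proof -
    have "(\<Sum>x\<in>S. if ell G z (x # w) = k then prod_list (map mu (x # w)) else 0)
       = (\<Sum>x\<in>S. prod_list (map mu w) * ((if ell G z w + 1 = k then (if x = c w then mu x else 0) else 0)
            + (if ell G z w = k then (if x = c w then 0 else mu x) else 0)))"
      by (rule sum.cong) (auto simp: ell_Cons c_def)
    also have "\<dots> = prod_list (map mu w) * ((if ell G z w + 1 = k then (\<Sum>x\<in>S. if x = c w then mu x else 0) else 0)
            + (if ell G z w = k then (\<Sum>x\<in>S. if x = c w then 0 else mu x) else 0))"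
      by (simp add: sum_distrib_left[symmetric] sum.distrib)
    also have "\<dots> = prod_list (map mu w) * ((if ell G z w + 1 = k then p else 0) + (if ell G z w = k then 1 - p else 0))"
      using key key2 cz[OF that] by simp
    finally show ?thesis .
  qed
  have "(\<Sum>w\<in>{w. set w \<subseteq> S \<and> length w = Suc m}. if ell G z w = k then prod_list (map mu w) else 0)
      = (\<Sum>(x,w)\<in>S \<times> L. if ell G z (x # w) = k then prod_list (map mu (x # w)) else 0)"
    unfolding lists_Suc_eq L_def[symmetric]
    by (subst sum.reindex) (auto simp: inj_on_def intro!: sum.cong)
  also have "\<dots> = (\<Sum>w\<in>L. \<Sum>x\<in>S. if ell G z (x # w) = k then prod_list (map mu (x # w)) else 0)"
    by (subst sum.cartesian_product[symmetric]) (rule sum.swap)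
  also have "\<dots> = (\<Sum>w\<in>L. prod_list (map mu w) * ((if ell G z w + 1 = k then p else 0) + (if ell G z w = k then 1 - p else 0)))"
    by (rule sum.cong) (auto simp: inner)
  also have "\<dots> = p * (\<Sum>w\<in>L. if ell G z w = k - 1 \<and> k \<noteq> 0 then prod_list (map mu w) else 0)
        + (1 - p) * (\<Sum>w\<in>L. if ell G z w = k then prod_list (map mu w) else 0)"
    by (simp add: sum_distrib_left sum.distrib[symmetric] algebra_simps; rule sum.cong; auto simp: algebra_simps)
  also have "(\<Sum>w\<in>L. if ell G z w = k - 1 \<and> k \<noteq> 0 then prod_list (map mu w) else 0)
     = (if k = 0 then 0 else real (m choose (k - 1)) * p ^ (k - 1) * (1 - p) ^ (m - (k - 1)))"
    using Suc.IH[of "k - 1"] by (cases "k = 0") (simp_all add: L_def S_def p_def)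
  also have "(\<Sum>w\<in>L. if ell G z w = k then prod_list (map mu w) else 0)
     = real (m choose k) * p ^ k * (1 - p) ^ (m - k)"
    using Suc.IH[of k] by (simp add: L_def S_def p_def)
  finally show ?case unfolding S_def p_def binom_recur .
qed

lemma poisson_thin:
  fixes t p :: real and k :: nat
  shows "(\<lambda>m. poisson_prob t m * (real (m choose k) * p ^ k * (1 - p) ^ (m - k))) sums poisson_prob (t * p) k"
proof -
  define f where "f = (\<lambda>m. poisson_prob t m * (real (m choose k) * p ^ k * (1 - p) ^ (m - k)))"
  define C where "C = exp (- t) * (t * p) ^ k / fact k"
  have fj: "f (j + k) = C * ((t * (1 - p)) ^ j / fact j)" for j
  proof -
    have b: "real ((j + k) choose k) = fact (j + k) / (fact k * fact j)"
      by (simp add: binomial_fact)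
    have fpos: "(fact (j + k) :: real) \<noteq> 0" by simp
    have "f (j + k) = exp (- t) * t ^ (j + k) / fact (j + k) * (fact (j + k) / (fact k * fact j)) * p ^ k * (1 - p) ^ j"
      unfolding f_def poisson_prob_def b by simp
    also have "\<dots> = exp (- t) * (t ^ k * t ^ j) * p ^ k * (1 - p) ^ j / (fact k * fact j)"
      using fpos by (simp add: power_add)
    also have "\<dots> = C * ((t * (1 - p)) ^ j / fact j)"
      unfolding C_def power_mult_distrib by simp
    finally show ?thesis .
  qed
  have e: "(\<lambda>j. (t * (1 - p)) ^ j / fact j) sums exp (t * (1 - p))"
    using exp_converges[of "t * (1 - p)"] by (simp add: divide_inverse mult.commute)
  have "(\<lambda>j. f (j + k)) sums (C * exp (t * (1 - p)))"
    unfolding fj by (rule sums_mult[OF e])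
  moreover have "C * exp (t * (1 - p)) = poisson_prob (t * p) k"
  proof -
    have "exp (- t) * exp (t * (1 - p)) = exp (- (t * p))"
      by (simp add: exp_add[symmetric] algebra_simps)
    then show ?thesis unfolding C_def poisson_prob_def
      by (metis (no_types, lifting) mult.commute mult.left_commute times_divide_eq_right)
  qed
  moreover have "(\<Sum>i<k. f i) = 0" unfolding f_def by (intro sum.neutral) (simp add: binomial_eq_0)
  ultimately have "f sums poisson_prob (t * p) k" by (simp add: sums_iff_shift)
  then show ?thesis unfolding f_def .
qed

lemma prod_list_nth: "prod_list (map (f :: 'a \<Rightarrow> real) w) = (\<Prod>i<length w. f (w ! i))"
  by (induction w) (simp_all add: prod.lessThan_Suc_shift del: prod.lessThan_Suc)

theorem lemma3:
  fixes G :: "('g, 'b) monoid_scheme"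
    and mu :: "'g \<Rightarrow> real"
    and M :: "'w measure"
    and W :: "nat \<Rightarrow> 'w \<Rightarrow> 'g"
    and N :: "real \<Rightarrow> 'w \<Rightarrow> nat"
    and t :: real and z :: 'g
  assumes grp: "group G"
    and mu_nonneg: "\<forall>x. 0 \<le> mu x"
    and mu_fin: "finite {x. mu x \<noteq> 0}"
    and mu_carrier: "{x. mu x \<noteq> 0} \<subseteq> carrier G"
    and mu_prob: "(\<Sum>x\<in>{x. mu x \<noteq> 0}. mu x) = 1"
    and A1: "\<forall>x\<in>carrier G. \<forall>y\<in>carrier G. mu (x \<otimes>\<^bsub>G\<^esub> y \<otimes>\<^bsub>G\<^esub> inv\<^bsub>G\<^esub> x) = mu y"
    and A2: "\<forall>y\<in>carrier G. mu (inv\<^bsub>G\<^esub> y) = mu y"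
    and P: "prob_space M"
    and W_indep: "prob_space.indep_vars M (\<lambda>_. count_space UNIV) W {1..}"
    and W_law: "\<forall>n\<ge>1. \<forall>x. measure M {\<omega>\<in>space M. W n \<omega> = x} = mu x"
    and N_pp: "prob_space.unit_poisson_process M N"
    and WN_indep: "prob_space.indep_set M
        (sets (vimage_algebra (space M) (\<lambda>\<omega>. restrict (\<lambda>n. W n \<omega>) {1..})
                 (Pi\<^sub>M {1..} (\<lambda>_. count_space UNIV))))
        (sets (vimage_algebra (space M) (\<lambda>\<omega>. restrict (\<lambda>s. N s \<omega>) {0..})
                 (Pi\<^sub>M {0..} (\<lambda>_. count_space UNIV))))"
    and t_nonneg: "0 \<le> t"
    and z_in: "z \<in> carrier G"
  shows "(\<lambda>\<omega>. ell G z (map (\<lambda>n. W n \<omega>) [1..<Suc (N t \<omega>)]))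
           \<in> measurable (completion M) (count_space UNIV)
       \<and> (\<forall>k. measure (completion M)
              {\<omega>\<in>space M. ell G z (map (\<lambda>n. W n \<omega>) [1..<Suc (N t \<omega>)]) = k}
            = poisson_prob (t * mu z) k)"
proof -
  interpret P: prob_space M by (rule P)
  define S where "S = {x. mu x \<noteq> 0}"
  define f where "f = (\<lambda>\<omega>. ell G z (map (\<lambda>n. W n \<omega>) [1..<Suc (N t \<omega>)]))"
  have Wm[measurable]: "W (Suc n) \<in> M \<rightarrow>\<^sub>M count_space UNIV" for n
    using conjunct1[OF W_indep[unfolded P.indep_vars_def]] by simp
  note pp = N_pp[unfolded P.unit_poisson_process_def]
  have Nm[measurable]: "N t \<in> M \<rightarrow>\<^sub>M count_space UNIV"
    using conjunct1[OF pp] t_nonneg by simp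
  have PN: "P.prob {\<omega>\<in>space M. N t \<omega> = m} = poisson_prob t m" for m
  proof -
    have "P.prob {\<omega>\<in>space M. N t \<omega> - N 0 \<omega> = m} = poisson_prob (t - 0) m"
      using conjunct2[OF conjunct2[OF conjunct2[OF conjunct2[OF pp]]]] t_nonneg by simp
    moreover have "{\<omega>\<in>space M. N t \<omega> - N 0 \<omega> = m} = {\<omega>\<in>space M. N t \<omega> = m}"
      using conjunct1[OF conjunct2[OF pp]] by auto
    ultimately show ?thesis by simp
  qed
  have WSm[measurable]: "Measurable.pred M (\<lambda>\<omega>. W (Suc n) \<omega> \<in> S)" for n
    by (rule pred_sets1[OF _ Wm]) simp
  define \<Omega>0 where "\<Omega>0 = {\<omega>\<in>space M. \<forall>n. W (Suc n) \<omega> \<in> S}"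
  have \<Omega>0_sets: "\<Omega>0 \<in> sets M" unfolding \<Omega>0_def by measurable
  have PWS: "P.prob {\<omega>\<in>space M. W (Suc n) \<omega> \<in> S} = 1" for n
  proof -
    have "{\<omega>\<in>space M. W (Suc n) \<omega> \<in> S} = (\<Union>x\<in>S. {\<omega>\<in>space M. W (Suc n) \<omega> = x})" by auto
    also have "P.prob \<dots> = (\<Sum>x\<in>S. P.prob {\<omega>\<in>space M. W (Suc n) \<omega> = x})"
    proof (rule measure_finite_Union)
      show "finite S" using mu_fin S_def by simp
      show "(\<lambda>x. {\<omega>\<in>space M. W (Suc n) \<omega> = x}) ` S \<subseteq> sets M" by auto
      show "disjoint_family_on (\<lambda>x. {\<omega>\<in>space M. W (Suc n) \<omega> = x}) S"
        unfolding disjoint_family_on_def by auto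
      show "emeasure M {\<omega>\<in>space M. W (Suc n) \<omega> = x} \<noteq> \<infinity>" for x
        by simp
    qed
    also have "\<dots> = (\<Sum>x\<in>S. mu x)" using W_law by simp
    finally show ?thesis using mu_prob S_def by simp
  qed
  have null0: "space M - \<Omega>0 \<in> null_sets M"
  proof -
    have a: "AE \<omega> in M. W (Suc n) \<omega> \<in> S" for n
      using P.AE_prob_1[OF PWS[of n]] by (rule eventually_mono) simp
    have "AE \<omega> in M. \<forall>n. W (Suc n) \<omega> \<in> S"
      unfolding AE_all_countable using a by (rule allI)
    then have "AE \<omega> in M. \<omega> \<notin> space M - \<Omega>0"
      by (rule eventually_mono) (simp add: \<Omega>0_def)
    moreover have "space M - \<Omega>0 \<in> sets M" using \<Omega>0_sets by (rule sets.Diff[OF sets.top])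
    ultimately show ?thesis using AE_iff_null_sets by blast
  qed
  define E where "E k = {\<omega>\<in>space M. f \<omega> = k}" for k
  define C where "C w = {\<omega>\<in>space M. \<forall>i<length w. W (Suc i) \<omega> = w ! i}" for w
  define NS where "NS m = {\<omega>\<in>space M. N t \<omega> = m}" for m
  define L where "L m = {w. set w \<subseteq> S \<and> length w = m}" for m
  define Lk where "Lk k m = {w \<in> L m. ell G z w = k}" for k m
  define B where "B k m = (\<Union>w\<in>Lk k m. C w)" for k m
  define PW where "PW = (Pi\<^sub>M {1..} (\<lambda>_::nat. count_space (UNIV :: 'g set)))"
  define PN where "PN = (Pi\<^sub>M {0..} (\<lambda>_::real. count_space (UNIV :: nat set)))"
  define FW where "FW = (\<lambda>\<omega>. restrict (\<lambda>n. W n \<omega>) {1..})"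
  define FN where "FN = (\<lambda>\<omega>. restrict (\<lambda>s. N s \<omega>) {0..})"
  have finL: "finite (L m)" for m unfolding L_def S_def using mu_fin by (simp add: finite_lists_length_eq)
  have finLk: "finite (Lk k m)" for k m unfolding Lk_def using finL by simp
  have C_sets[measurable]: "C w \<in> sets M" for w unfolding C_def by measurable
  have NS_sets[measurable]: "NS m \<in> sets M" for m unfolding NS_def by measurable
  have PC: "P.prob (C w) = prod_list (map mu w)" for w
  proof (cases "w = []")
    case True
    then have "C w = space M" unfolding C_def by simp
    then show ?thesis using True P.prob_space by simp
  next
    case False
    have eq: "C w = (\<Inter>i\<in>Suc ` {..<length w}. W i -` {w ! (i - 1)} \<inter> space M)"
      unfolding C_def using False by auto
    have "P.prob (\<Inter>i\<in>Suc ` {..<length w}. W i -` {w ! (i - 1)} \<inter> space M)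
        = (\<Prod>i\<in>Suc ` {..<length w}. P.prob (W i -` {w ! (i - 1)} \<inter> space M))"
      by (rule P.indep_varsD[OF W_indep]) (use False in auto)
    also have "\<dots> = (\<Prod>i<length w. P.prob (W (Suc i) -` {w ! i} \<inter> space M))"
      by (subst prod.reindex) auto
    also have "\<dots> = (\<Prod>i<length w. mu (w ! i))"
    proof (rule prod.cong)
      fix i
      have "W (Suc i) -` {w ! i} \<inter> space M = {\<omega>\<in>space M. W (Suc i) \<omega> = w ! i}" by auto
      then show "P.prob (W (Suc i) -` {w ! i} \<inter> space M) = mu (w ! i)"
        using W_law by simp
    qed simp
    finally show ?thesis unfolding eq prod_list_nth .
  qed
  have Cdisj: "C w \<inter> C w' = {}" if "length w = length w'" "w \<noteq> w'" for w w'
  proof -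
    have "\<exists>i<length w. w ! i \<noteq> w' ! i" using that by (auto simp: list_eq_iff_nth_eq)
    then show ?thesis unfolding C_def using that(1) by (auto; metis)
  qed
  have PB: "P.prob (B k m) = real (m choose k) * mu z ^ k * (1 - mu z) ^ (m - k)" for k m
  proof -
    have "P.prob (B k m) = (\<Sum>w\<in>Lk k m. P.prob (C w))"
      unfolding B_def
    proof (rule measure_finite_Union)
      show "disjoint_family_on C (Lk k m)"
        unfolding disjoint_family_on_def using Cdisj by (auto simp: Lk_def L_def)
    qed (auto simp: finLk)
    also have "\<dots> = (\<Sum>w\<in>L m. if ell G z w = k then prod_list (map mu w) else 0)"
      unfolding Lk_def PC by (rule sum.inter_filter[OF finL])
    also have "\<dots> = real (m choose k) * mu z ^ k * (1 - mu z) ^ (m - k)"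
      unfolding L_def S_def
      by (rule ell_binomial[OF grp mu_fin mu_carrier mu_prob A1 z_in])
    finally show ?thesis .
  qed
  have compW: "(\<lambda>h. h (Suc i)) \<in> PW \<rightarrow>\<^sub>M count_space UNIV" for i
    unfolding PW_def by (rule measurable_component_singleton) simp
  have compN: "(\<lambda>h. h t) \<in> PN \<rightarrow>\<^sub>M count_space UNIV"
    unfolding PN_def by (rule measurable_component_singleton) (simp add: t_nonneg)
  have FW_space: "FW \<omega> \<in> space PW" for \<omega> unfolding FW_def PW_def space_PiM by auto
  have FN_space: "FN \<omega> \<in> space PN" for \<omega> unfolding FN_def PN_def space_PiM by auto
  have B_vim: "B k m \<in> sets (vimage_algebra (space M) FW PW)" for k m
  proof -
    define A where "A = {h \<in> space PW. \<exists>w\<in>Lk k m. \<forall>i<length w. h (Suc i) = w ! i}"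
    have [measurable]: "Measurable.pred PW (\<lambda>h. h (Suc i) = c)" for i c
      using compW by measurable
    have "A \<in> sets PW" unfolding A_def using finLk by measurable
    then have "FW -` A \<inter> space M \<in> sets (vimage_algebra (space M) FW PW)"
      by (rule in_vimage_algebra)
    moreover have "FW -` A \<inter> space M = B k m"
      unfolding A_def B_def C_def using FW_space by (auto simp: FW_def)
    ultimately show ?thesis by simp
  qed
  have NS_vim: "NS m \<in> sets (vimage_algebra (space M) FN PN)" for m
  proof -
    define A where "A = {h \<in> space PN. h t = m}"
    have "A \<in> sets PN" unfolding A_def using compN by measurable
    then have "FN -` A \<inter> space M \<in> sets (vimage_algebra (space M) FN PN)"
      by (rule in_vimage_algebra)
    moreover have "FN -` A \<inter> space M = NS m"
      unfolding A_def NS_def using FN_space t_nonneg by (auto simp: FN_def)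
    ultimately show ?thesis by simp
  qed
  have indep: "P.prob (B k m \<inter> NS m) = P.prob (B k m) * P.prob (NS m)" for k m
    by (rule P.indep_setD[OF WN_indep[folded PW_def PN_def FW_def FN_def] B_vim NS_vim])
  define D where "D k m = \<Omega>0 \<inter> (B k m \<inter> NS m)" for k m
  have B_sets: "B k m \<in> sets M" for k m unfolding B_def using finLk by auto
  have D_sets: "D k m \<in> sets M" for k m unfolding D_def using \<Omega>0_sets B_sets by auto
  have PD: "P.prob (D k m) = poisson_prob t m * (real (m choose k) * mu z ^ k * (1 - mu z) ^ (m - k))" for k m
  proof -
    have "D k m = (B k m \<inter> NS m) - (space M - \<Omega>0)" unfolding D_def NS_def by auto
    then have "P.prob (D k m) = P.prob (B k m \<inter> NS m)"
      using measure_Diff_null_set[OF _ null0] B_sets NS_sets by auto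
    then show ?thesis using indep PB PN NS_def by simp
  qed
  have nthv: "map (\<lambda>n. W n \<omega>) [1..<Suc m] ! i = W (Suc i) \<omega>" if "i < m" for \<omega> m i
    using that by (simp del: upt_Suc)
  have Cv: "\<omega> \<in> C w \<longleftrightarrow> w = map (\<lambda>n. W n \<omega>) [1..<Suc (N t \<omega>)]"
    if "\<omega> \<in> space M" "length w = N t \<omega>" for \<omega> w
    using that unfolding C_def by (auto simp: list_eq_iff_nth_eq nthv simp del: upt_Suc)
  have vL: "map (\<lambda>n. W n \<omega>) [1..<Suc (N t \<omega>)] \<in> L (N t \<omega>)" if "\<omega> \<in> \<Omega>0" for \<omega>
  proof -
    have "W n \<omega> \<in> S" if "1 \<le> n" for n
      using \<open>\<omega> \<in> \<Omega>0\<close> that unfolding \<Omega>0_def by (cases n) auto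
    then show ?thesis unfolding L_def by auto
  qed
  have Bv: "\<omega> \<in> B k (N t \<omega>) \<longleftrightarrow> f \<omega> = k" if "\<omega> \<in> \<Omega>0" for \<omega> k
  proof -
    have sp: "\<omega> \<in> space M" using that unfolding \<Omega>0_def by auto
    have "\<omega> \<in> B k (N t \<omega>) \<longleftrightarrow> (\<exists>w\<in>Lk k (N t \<omega>). w = map (\<lambda>n. W n \<omega>) [1..<Suc (N t \<omega>)])"
      unfolding B_def using Cv[OF sp] by (auto simp: Lk_def L_def)
    also have "\<dots> \<longleftrightarrow> f \<omega> = k"
      using vL[OF that] unfolding Lk_def f_def by auto
    finally show ?thesis .
  qed
  have UD: "E k \<inter> \<Omega>0 = (\<Union>m. D k m)" for k
  proof (rule Set.set_eqI)
    fix \<omega>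
    show "\<omega> \<in> E k \<inter> \<Omega>0 \<longleftrightarrow> \<omega> \<in> (\<Union>m. D k m)"
    proof
      assume a: "\<omega> \<in> E k \<inter> \<Omega>0"
      then have "\<omega> \<in> D k (N t \<omega>)"
        using Bv[of \<omega> k] unfolding D_def E_def NS_def by auto
      then show "\<omega> \<in> (\<Union>m. D k m)" by blast
    next
      assume "\<omega> \<in> (\<Union>m. D k m)"
      then obtain m where "\<omega> \<in> D k m" by blast
      then have "\<omega> \<in> \<Omega>0" "m = N t \<omega>" "\<omega> \<in> B k m" "\<omega> \<in> space M"
        unfolding D_def NS_def by auto
      then show "\<omega> \<in> E k \<inter> \<Omega>0" using Bv[of \<omega> k] unfolding E_def by auto
    qed
  qed
  have EO_sets: "E k \<inter> \<Omega>0 \<in> sets M" for k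
    unfolding UD using D_sets by auto
  have PEO: "P.prob (E k \<inter> \<Omega>0) = poisson_prob (t * mu z) k" for k
  proof -
    have "(\<lambda>m. P.prob (D k m)) sums P.prob (\<Union>m. D k m)"
    proof (rule P.finite_measure_UNION)
      show "range (D k) \<subseteq> sets M" using D_sets by auto
      show "disjoint_family (D k)" unfolding disjoint_family_on_def D_def NS_def by auto
    qed
    moreover have "(\<lambda>m. P.prob (D k m)) sums poisson_prob (t * mu z) k"
      unfolding PD by (rule poisson_thin)
    ultimately show ?thesis unfolding UD using sums_unique2 by blast
  qed
  have Enull: "E k - \<Omega>0 \<in> null_sets (completion M)" for k
    by (rule null_sets_completion_subset[OF _ null_sets_completionI[OF null0]]) (auto simp: E_def)
  have Esplit: "E k = (E k \<inter> \<Omega>0) \<union> (E k - \<Omega>0)" for k by auto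
  have E_sets: "E k \<in> sets (completion M)" for k
    using Esplit[of k] EO_sets[of k] Enull[of k] by (metis sets.Un null_setsD2 sets_completionI_sets)
  have PE: "measure (completion M) (E k) = poisson_prob (t * mu z) k" for k
  proof -
    have "measure (completion M) (E k) = measure (completion M) (E k \<inter> \<Omega>0)"
      using measure_Un_null_set[OF sets_completionI_sets[OF EO_sets[of k]] Enull[of k]] Esplit[of k] by simp
    also have "\<dots> = P.prob (E k \<inter> \<Omega>0)" using EO_sets by simp
    finally show ?thesis using PEO by simp
  qed
  have meas: "f \<in> measurable (completion M) (count_space UNIV)"
  proof (subst measurable_count_space_eq_countable)
    show "countable (UNIV :: nat set)" by simp
    show "f \<in> space (completion M) \<rightarrow> UNIV \<and> (\<forall>a\<in>UNIV. f -` {a} \<inter> space (completion M) \<in> sets (completion M))"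
    proof (intro conjI ballI)
      fix a :: nat
      have "f -` {a} \<inter> space (completion M) = E a" unfolding E_def by auto
      then show "f -` {a} \<inter> space (completion M) \<in> sets (completion M)" using E_sets by simp
    qed simp
  qed
  show ?thesis using meas PE unfolding f_def E_def by simp
qed

end
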